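(* Let $\mathbb{R}_1=\{x\in\mathbb{R}: x\ge 1\}$, $\mathbb{N}_1=\{1,2,3,\dots\}$, and let $U:\mathbb{R}_1\to\mathbb{R}_1$ be defined by \[ U(x)=\begin{cases} \dfrac{x}{2} & \text{if } \lfloor x\rfloor \text{ is even},\\[4pt] \dfrac{3x+1}{2} & \text{if } \lfloor x\rfloor \text{ is odd}.\end{cases}\] If $x\in\mathbb{R}_1$ and $k\in\mathbb{N}_1$ satisfy $U^k(x)=x$, then $x\in\mathbb{N}_1$. Equivalently, the only $U$-cycles are the $T$-cycles, where $T=U|_{\mathbb{N}_1}$ is the integer $3n+1$ function $T(n)=n/2$ for even $n$, $T(n)=(3n+1)/2$ for odd $n$.
   Context: $\lfloor x\rfloor$ denotes the largest integer $\le x$. For a function $f:X\to X$, $f^0$ is the identity and $f^i=f\circ f^{i-1}$. An $f$-cycle is the trajectory $(f^i(z))_{i\ge 0}$ of a point $z$ with $f^n(z)=z$ for some $n\ge 1$. Note that $U$ restricted to $\mathbb{N}_1$ coincides with $T$. *)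

theory Defs
  imports Complex_Main
begin

text \<open>The map U on R_1 = [1,oo). It is defined on all reals here; on [1,oo) it agrees
with the paper's U and maps [1,oo) into itself.\<close>
definition U :: "real \<Rightarrow> real" where
  "U x = (if even \<lfloor>x\<rfloor> then x / 2 else (3 * x + 1) / 2)"

end

theory Submission
  imports Defs
begin

definition h :: "real \<Rightarrow> real" where "h y = frac y / y"

lemma U_ge1: assumes "y \<ge> 1" shows "U y \<ge> 1"
proof (cases "even \<lfloor>y\<rfloor>")
  case True
  have "\<lfloor>y\<rfloor> \<ge> 1" using assms by linarith
  with True have "\<lfloor>y\<rfloor> \<ge> 2" by presburger
  hence "y \<ge> 2" by linarith
  then show ?thesis using True by (simp add: U_def)
next
  case False
  then show ?thesis using assms by (simp add: U_def)
qed

lemma U_even: assumes "y \<ge> 1" "even \<lfloor>y\<rfloor>" shows "h (U y) = h y"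
proof -
  obtain m where m: "\<lfloor>y\<rfloor> = 2 * m" using assms(2) by blast
  have "\<lfloor>y / 2\<rfloor> = m"
    using m by (simp add: floor_eq_iff)
  hence "frac (y/2) = frac y / 2" using m by (simp add: frac_def)
  thus ?thesis using assms by (simp add: h_def U_def)
qed

lemma U_odd: assumes "y \<ge> 1" "odd \<lfloor>y\<rfloor>"
  shows "h (U y) \<le> h y" and "frac y > 0 \<Longrightarrow> h (U y) < h y"
proof -
  obtain m where m: "\<lfloor>y\<rfloor> = 2 * m + 1" using assms(2) oddE by blast
  have Uy: "U y = (3*y+1)/2" using assms by (simp add: U_def)
  have "(3*y+1)/2 = of_int (3*m+2) + 3 * frac y / 2" using m by (simp add: frac_def field_simps)
  hence "\<lfloor>(3*y+1)/2\<rfloor> \<ge> 3*m+2" using frac_ge_0[of y]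
    unfolding le_floor_iff by simp
  hence F: "frac (U y) \<le> 3 * frac y / 2" proof -
    have "frac (U y) = U y - of_int \<lfloor>U y\<rfloor>" by (simp add: frac_def)
    also have "\<dots> \<le> (3*y+1)/2 - of_int (3*m+2)" proof -
      have "real_of_int (3*m+2) \<le> of_int \<lfloor>(3*y+1)/2\<rfloor>"
        using \<open>\<lfloor>(3*y+1)/2\<rfloor> \<ge> 3*m+2\<close> by (simp only: of_int_le_iff)
      thus ?thesis unfolding Uy by linarith
    qed
    also have "\<dots> = 3 * frac y / 2" using \<open>(3*y+1)/2 = of_int (3*m+2) + 3 * frac y / 2\<close> by linarith
    finally show ?thesis .
  qed
  have pos: "U y > 0" using U_ge1 assms by force
  have f0: "frac (U y) \<ge> 0" by simp
  have "h (U y) \<le> (3 * frac y / 2) / U y" unfolding h_def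
    by (rule divide_right_mono[OF F]) (use pos in simp)
  also have "\<dots> = 3 * frac y / (3*y+1)" using Uy by simp
  finally have A: "h (U y) \<le> 3 * frac y / (3*y+1)" .
  have "3 * frac y / (3*y+1) \<le> frac y / y" using assms(1) frac_ge_0[of y]
    by (simp add: field_simps)
  thus "h (U y) \<le> h y" using A h_def by simp
  assume "frac y > 0"
  hence "3 * frac y / (3*y+1) < frac y / y" using assms(1)
    by (simp add: field_simps)
  thus "h (U y) < h y" using A h_def by simp
qed

lemma U_mono: "y \<ge> 1 \<Longrightarrow> h (U y) \<le> h y"
  using U_even U_odd by (cases "even \<lfloor>y\<rfloor>") auto

lemma iter_ge1: "y \<ge> 1 \<Longrightarrow> (U ^^ i) y \<ge> 1"
  by (induction i) (auto simp: U_ge1)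

lemma iter_mono: "y \<ge> 1 \<Longrightarrow> h ((U ^^ i) y) \<le> h y"
proof (induction i arbitrary: y)
  case (Suc i)
  have "(U ^^ Suc i) y = (U ^^ i) (U y)" by (simp add: funpow_swap1)
  thus ?case using Suc.IH[of "U y"] U_ge1[OF Suc.prems] U_mono[OF Suc.prems] by simp
qed simp

theorem theorem1:
  fixes x :: real and k :: nat
  assumes "x \<ge> 1" and "k \<ge> 1" and "(U ^^ k) x = x"
  shows "\<exists>n::nat. n \<ge> 1 \<and> x = real n"
proof (cases "frac x = 0")
  case True
  hence "x = of_int \<lfloor>x\<rfloor>" by (simp add: frac_def)
  moreover have "\<lfloor>x\<rfloor> \<ge> 1" using assms(1) by linarith
  ultimately have "x = real (nat \<lfloor>x\<rfloor>) \<and> nat \<lfloor>x\<rfloor> \<ge> 1" by simp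
  thus ?thesis by blast
next
  case False
  have fx: "frac x > 0" using False frac_ge_0[of x] by linarith
  have ev: "even \<lfloor>(U ^^ i) x\<rfloor>" if "i < k" for i
  proof (rule ccontr)
    assume od: "odd \<lfloor>(U ^^ i) x\<rfloor>"
    let ?y = "(U ^^ i) x"
    have y1: "?y \<ge> 1" using iter_ge1 assms(1) by blast
    have hy: "h ?y \<le> h x" using iter_mono assms(1) by blast
    have "(U ^^ k) x = (U ^^ (k - Suc i)) (U ?y)"
      proof -
      have "k = (k - Suc i) + Suc i" using that by simp
      hence "(U ^^ k) x = (U ^^ (k - Suc i)) ((U ^^ Suc i) x)"
        by (metis funpow_add o_apply)
      thus ?thesis by simp
    qed
    hence hk: "h x \<le> h (U ?y)" using iter_mono[OF U_ge1[OF y1], of "k - Suc i"] assms(3) by simp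
    have "h ?y > 0"
    proof -
      have "h ?y \<ge> h (U ?y)" using U_mono y1 by blast
      hence "h ?y \<ge> h x" using hk by simp
      moreover have "h x > 0" using fx assms(1) by (simp add: h_def)
      ultimately show ?thesis by simp
    qed
    hence "frac ?y > 0" using y1 frac_ge_0[of ?y] by (auto simp: h_def zero_less_divide_iff)
    hence "h (U ?y) < h ?y" using U_odd(2)[OF y1 od] by blast
    thus False using hk hy by simp
  qed
  have "i \<le> k \<Longrightarrow> (U ^^ i) x = x / 2 ^ i" for i
  proof (induction i)
    case (Suc i)
    have e: "even \<lfloor>(U ^^ i) x\<rfloor>" by (rule ev) (use Suc.prems in simp)
    have "(U ^^ Suc i) x = U ((U ^^ i) x)" by simp
    also have "\<dots> = (U ^^ i) x / 2" using e by (simp only: U_def if_True)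
    also have "\<dots> = x / 2 ^ Suc i" using Suc by simp
    finally show ?case .
  qed simp
  hence "x = x / 2 ^ k" using assms(3) by simp
  moreover have "(2::real) ^ k > 1" using assms(2) by simp
  moreover have "x / 2 ^ k < x" using assms(1) \<open>(2::real) ^ k > 1\<close>
    by (simp add: divide_less_eq)
  ultimately show ?thesis by linarith
qed

end
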